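(* Let $(X,\mathcal{A},\mu)$ be a probability space and let $\{E_i\}_{i\in\mathbb{N}}$ be a sequence of sets in $\mathcal{A}$. Suppose there exist constants $C'>0$, $c>0$ and a sequence of finite sets $\mathcal{S}_k\subset\mathbb{Z}$ with $\min\mathcal{S}_k\to+\infty$ as $k\to\infty$ such that for all sufficiently large $k$: $$\sum_{i\in\mathcal{S}_k}\mu(E_i)\ge c\qquad\text{and}\qquad \sum_{\substack{s<t\\ s,t\in\mathcal{S}_k}}\mu(E_s\cap E_t)\le C'\Big(\sum_{i\in\mathcal{S}_k}\mu(E_i)\Big)^2.$$ Suppose in addition that condition (M1) holds. Then $\mu(E_\infty)=1$.
   Context: $E_\infty:=\limsup_{i\to\infty}E_i=\bigcap_{t=1}^\infty\bigcup_{i=t}^\infty E_i$. Condition (M1): for every $\delta>0$ and all natural numbers $q_1<q_2$ there exists $i_0=i_0(q_1,q_2,\delta)$ such that for all $i\ge i_0$, $$\mu(A\cap E_i)\le(1+\delta)\mu(A)\mu(E_i),\qquad\text{where } A=\bigcup_{j=q_1}^{q_2}E_j.$$ *)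

theory Defs
  imports "HOL-Probability.Probability"
begin

definition M1 :: "'a measure \<Rightarrow> (nat \<Rightarrow> 'a set) \<Rightarrow> bool" where
  "M1 M E \<longleftrightarrow>
     (\<forall>\<delta>::real. \<delta> > 0 \<longrightarrow> (\<forall>q1 q2::nat. q1 < q2 \<longrightarrow>
        (\<exists>i0. \<forall>i\<ge>i0.
           measure M ((\<Union>j\<in>{q1..q2}. E j) \<inter> E i)
             \<le> (1 + \<delta>) * measure M (\<Union>j\<in>{q1..q2}. E j) * measure M (E i))))"

definition E_infty :: "(nat \<Rightarrow> 'a set) \<Rightarrow> 'a set" where
  "E_infty E = (\<Inter>t. \<Union>i\<in>{t..}. E i)"

end

theory Submission
  imports Defs
begin

lemma chung_erdos:
  fixes M :: "'a measure" and B :: "nat \<Rightarrow> 'a set"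
  assumes fm: "finite_measure M" and fin: "finite I" and Bs: "\<And>i. i \<in> I \<Longrightarrow> B i \<in> sets M"
  shows "(\<Sum>i\<in>I. measure M (B i))^2 \<le> measure M (\<Union>i\<in>I. B i) * (\<Sum>i\<in>I. \<Sum>j\<in>I. measure M (B i \<inter> B j))"
proof -
  interpret finite_measure M by (rule fm)
  define U where "U = (\<Union>i\<in>I. B i)"
  define S1 where "S1 = (\<Sum>i\<in>I. measure M (B i))"
  define S2 where "S2 = (\<Sum>i\<in>I. \<Sum>j\<in>I. measure M (B i \<inter> B j))"
  define u where "u = measure M U"
  have Us: "U \<in> sets M" unfolding U_def using fin Bs by auto
  have Bsp: "\<And>i. i \<in> I \<Longrightarrow> B i \<subseteq> space M" using Bs sets.sets_into_space by blast
  have Usp: "U \<subseteq> space M" using Us sets.sets_into_space by blast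
  show ?thesis
  proof (cases "u = 0")
    case True
    have "\<And>i. i \<in> I \<Longrightarrow> measure M (B i) = 0"
    proof -
      fix i assume i: "i \<in> I"
      have "measure M (B i) \<le> u" unfolding u_def U_def
        using i Bs Us U_def by (intro finite_measure_mono) auto
      then show "measure M (B i) = 0" using True measure_nonneg[of M "B i"] by linarith
    qed
    then have "S1 = 0" unfolding S1_def by simp
    then show ?thesis using S1_def by (simp add: sum_nonneg)
  next
    case False
    then have upos: "u > 0" unfolding u_def using measure_nonneg[of M U] by linarith
    define l where "l = S1 / u"
    define N where "N = (\<lambda>x. \<Sum>i\<in>I. indicator (B i) x :: real)"
    have pw: "(N x - l * indicator U x)^2 =
       (\<Sum>i\<in>I. \<Sum>j\<in>I. indicator (B i \<inter> B j) x) - 2 * l * N x + l^2 * indicator U x" for x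
    proof (cases "x \<in> U")
      case True
      have "(N x)^2 = (\<Sum>i\<in>I. \<Sum>j\<in>I. indicator (B i \<inter> B j) x)"
        unfolding N_def power2_eq_square sum_product indicator_inter_arith by simp
      then show ?thesis using True by (simp add: power2_eq_square algebra_simps)
    next
      case False
      then have "\<And>i. i \<in> I \<Longrightarrow> x \<notin> B i" unfolding U_def by auto
      then show ?thesis using False unfolding N_def by (simp add: indicator_def)
    qed
    have intB: "\<And>i. i \<in> I \<Longrightarrow> integrable M (indicator (B i) :: 'a \<Rightarrow> real)"
      using Bs by (auto intro!: integrable_real_indicator simp: emeasure_eq_measure)
    have intBB: "\<And>i j. i \<in> I \<Longrightarrow> j \<in> I \<Longrightarrow> integrable M (indicator (B i \<inter> B j) :: 'a \<Rightarrow> real)"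
      using Bs by (auto intro!: integrable_real_indicator simp: emeasure_eq_measure)
    have iN: "integral\<^sup>L M N = S1" unfolding N_def S1_def
      using intB Bsp by (simp add: integral_sum Int_absorb2)
    have iNN: "integral\<^sup>L M (\<lambda>x. \<Sum>i\<in>I. \<Sum>j\<in>I. indicator (B i \<inter> B j) x :: real) = S2"
      unfolding S2_def using intBB Bsp
      by (simp add: integral_sum integrable_sum Int_absorb2 Int_assoc le_infI1)
    have iU: "integral\<^sup>L M (indicator U :: 'a \<Rightarrow> real) = u" unfolding u_def using Usp by (simp add: Int_absorb2)
    have intN: "integrable M N" unfolding N_def using intB by auto
    have intNN: "integrable M (\<lambda>x. \<Sum>i\<in>I. \<Sum>j\<in>I. indicator (B i \<inter> B j) x :: real)" using intBB by auto
    have intU: "integrable M (indicator U :: 'a \<Rightarrow> real)" using Us by (auto intro!: integrable_real_indicator simp: emeasure_eq_measure)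
    have "0 \<le> integral\<^sup>L M (\<lambda>x. (N x - l * indicator U x)^2)"
      by (rule integral_nonneg_AE) auto
    also have "\<dots> = integral\<^sup>L M (\<lambda>x. (\<Sum>i\<in>I. \<Sum>j\<in>I. indicator (B i \<inter> B j) x) - 2 * l * N x + l^2 * indicator U x)"
      by (simp only: pw)
    also have "\<dots> = S2 - 2 * l * S1 + l^2 * u"
      using intN intNN intU iN iNN iU by simp
    finally have "0 \<le> S2 - 2 * l * S1 + l^2 * u" .
    then have "0 \<le> S2 - S1^2 / u" unfolding l_def using upos
      by (simp add: power2_eq_square field_simps)
    then have "S1^2 \<le> u * S2" using upos by (simp add: field_simps)
    then show ?thesis unfolding S1_def S2_def u_def U_def .
  qed
qed


lemma pair_split:
  fixes f :: "nat \<Rightarrow> nat \<Rightarrow> real"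
  assumes fin: "finite I" and sym: "\<And>i j. f i j = f j i"
  shows "(\<Sum>i\<in>I. \<Sum>j\<in>I. f i j) = (\<Sum>i\<in>I. f i i) + 2 * (\<Sum>(s,t)\<in>{(s,t). s\<in>I \<and> t\<in>I \<and> s<t}. f s t)"
proof -
  define D where "D = (\<lambda>i. (i,i)) ` I"
  define L where "L = {(s,t). s\<in>I \<and> t\<in>I \<and> s<t}"
  define R where "R = {(s,t). s\<in>I \<and> t\<in>I \<and> t<s}"
  have split: "I \<times> I = D \<union> (L \<union> R)" unfolding D_def L_def R_def by auto
  have finL: "finite L" "finite R" "finite D"
    using fin by (auto intro: finite_subset[of _ "I \<times> I"] simp: L_def R_def D_def)
  have "(\<Sum>i\<in>I. \<Sum>j\<in>I. f i j) = (\<Sum>(i,j)\<in>I \<times> I. f i j)"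
    by (rule sum.cartesian_product)
  also have "\<dots> = (\<Sum>(i,j)\<in>D. f i j) + ((\<Sum>(i,j)\<in>L. f i j) + (\<Sum>(i,j)\<in>R. f i j))"
    unfolding split using finL
    by (subst sum.union_disjoint, auto simp: D_def L_def R_def intro: sum.union_disjoint)
  also have "(\<Sum>(i,j)\<in>D. f i j) = (\<Sum>i\<in>I. f i i)"
    unfolding D_def by (subst sum.reindex) (auto simp: inj_on_def)
  also have "R = prod.swap ` L" unfolding R_def L_def by auto
  also have "(\<Sum>(i,j)\<in>prod.swap ` L. f i j) = (\<Sum>(i,j)\<in>L. f i j)"
    by (subst sum.reindex) (auto simp: inj_on_def sym intro!: sum.cong)
  finally show ?thesis unfolding L_def by simp
qed


theorem theorem2:
  fixes M :: "'a measure" and E :: "nat \<Rightarrow> 'a set"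
    and S :: "nat \<Rightarrow> nat set" and C' c :: real
  assumes "prob_space M"
    and "\<And>i. E i \<in> sets M"
    and "C' > 0" and "c > 0"
    and "\<And>k. finite (S k)"
    and "filterlim (\<lambda>k. Min (S k)) at_top sequentially"
    and "eventually (\<lambda>k. (\<Sum>i\<in>S k. measure M (E i)) \<ge> c
            \<and> (\<Sum>(s, t)\<in>{(s, t). s \<in> S k \<and> t \<in> S k \<and> s < t}. measure M (E s \<inter> E t))
                \<le> C' * (\<Sum>i\<in>S k. measure M (E i))^2) sequentially"
    and "M1 M E"
  shows "measure M (E_infty E) = 1"
proof -
  interpret P: prob_space M by (rule assms(1))
  note Es = assms(2)
  define F where "F t = (\<Union>i\<in>{t..}. E i)" for t
  have Fs: "F t \<in> sets M" for t unfolding F_def using Es by auto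
  have key: "measure M (F t) = 1" for t
  proof (rule ccontr)
    define m where "m = measure M (F t)"
    assume "measure M (F t) \<noteq> 1"
    then have m1: "m < 1" using P.prob_le_1[of "F t"] unfolding m_def by linarith
    have m0: "0 \<le> m" unfolding m_def by simp
    define \<delta> where "\<delta> = (1 - m) / 2"
    have d0: "\<delta> > 0" unfolding \<delta>_def using m1 by simp
    define \<rho> where "\<rho> = 1 - (1 + \<delta>) * m"
    have "\<delta> * m \<le> \<delta>" using m1 d0 by (simp add: mult_left_le)
    then have "\<rho> \<ge> 1 - m - \<delta>" unfolding \<rho>_def by (simp add: algebra_simps)
    moreover have "1 - m - \<delta> = \<delta>" unfolding \<delta>_def by (simp add: field_simps)
    ultimately have r0: "\<rho> > 0" using d0 by linarith
    define \<eta> where "\<eta> = c / (1 + 2 * C' * c)"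
    have den: "1 + 2 * C' * c > 0" using assms(3,4) by (simp add: add_pos_pos)
    have e0: "\<eta> > 0" unfolding \<eta>_def using den assms(4) by simp
    define \<epsilon> where "\<epsilon> = \<rho>^2 * \<eta> / 2"
    have eps0: "\<epsilon> > 0" unfolding \<epsilon>_def using r0 e0 by simp
    define A where "A q = (\<Union>j\<in>{t..q}. E j)" for q
    have As: "A q \<in> sets M" for q unfolding A_def using Es by auto
    have incA: "incseq A" unfolding A_def incseq_def by (auto 0 4 intro: bexI)
    have UA: "(\<Union>q. A q) = F t" unfolding A_def F_def by auto (meson atLeastAtMost_iff order_refl)
    have "(\<lambda>q. measure M (A q)) \<longlonglongrightarrow> m"
      using P.finite_Lim_measure_incseq[of A] As incA UA unfolding m_def by auto
    then have "eventually (\<lambda>q. measure M (A q) > m - \<epsilon>) sequentially"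
      using eps0 by (intro order_tendstoD(1)) auto
    then obtain N where N: "\<And>q. q \<ge> N \<Longrightarrow> measure M (A q) > m - \<epsilon>"
      unfolding eventually_sequentially by auto
    define q where "q = max N (Suc t)"
    have Aq: "measure M (A q) > m - \<epsilon>" using N q_def by simp
    have AqF: "A q \<subseteq> F t" unfolding A_def F_def by auto
    have Aqm: "measure M (A q) \<le> m" unfolding m_def using AqF Fs
      by (intro P.finite_measure_mono) auto
    have "t < q" unfolding q_def by simp
    then obtain i0 where i0: "\<And>i. i \<ge> i0 \<Longrightarrow>
        measure M (A q \<inter> E i) \<le> (1 + \<delta>) * measure M (A q) * measure M (E i)"
      using assms(8) d0 unfolding M1_def A_def by blast
    have ev1: "eventually (\<lambda>k. max i0 t \<le> Min (S k)) sequentially"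
      using assms(6) unfolding filterlim_at_top by blast
    obtain k where kmin: "max i0 t \<le> Min (S k)"
      and kc: "(\<Sum>i\<in>S k. measure M (E i)) \<ge> c"
      and kp: "(\<Sum>(s, t)\<in>{(s, t). s \<in> S k \<and> t \<in> S k \<and> s < t}. measure M (E s \<inter> E t))
                \<le> C' * (\<Sum>i\<in>S k. measure M (E i))^2"
      using eventually_happens'[OF _ eventually_conj[OF ev1 assms(7)]] by auto
    define Sk where "Sk = S k"
    define \<sigma> where "\<sigma> = (\<Sum>i\<in>Sk. measure M (E i))"
    have s0: "\<sigma> \<ge> c" using kc unfolding \<sigma>_def Sk_def .
    have sp: "\<sigma> > 0" using s0 assms(4) by linarith
    have finS: "finite Sk" unfolding Sk_def using assms(5) .
    have Sne: "Sk \<noteq> {}" using sp unfolding \<sigma>_def by auto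
    have Sge: "i \<ge> i0 \<and> i \<ge> t" if "i \<in> Sk" for i
      using Min_le[OF finS that] kmin unfolding Sk_def by auto
    define B where "B i = E i - A q" for i
    have Bs: "B i \<in> sets M" for i unfolding B_def using Es As by auto
    have Blow: "\<rho> * measure M (E i) \<le> measure M (B i)" if "i \<in> Sk" for i
    proof -
      have eq: "measure M (B i) = measure M (E i) - measure M (E i \<inter> A q)"
        unfolding B_def using Es As by (rule P.finite_measure_Diff')
      have l1: "measure M (E i \<inter> A q) \<le> (1 + \<delta>) * measure M (A q) * measure M (E i)"
        using i0 Sge[OF that] by (simp add: Int_commute)
      have l2: "(1 + \<delta>) * measure M (A q) * measure M (E i) \<le> (1 + \<delta>) * m * measure M (E i)"
        using Aqm d0 by (intro mult_right_mono mult_left_mono) auto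
      have "\<rho> * measure M (E i) = measure M (E i) - (1 + \<delta>) * m * measure M (E i)"
        unfolding \<rho>_def by (simp add: algebra_simps)
      then show ?thesis using eq l1 l2 by linarith
    qed
    have sumB: "\<rho> * \<sigma> \<le> (\<Sum>i\<in>Sk. measure M (B i))"
      unfolding \<sigma>_def sum_distrib_left using Blow by (rule sum_mono)
    have rs0: "0 \<le> \<rho> * \<sigma>" using r0 sp by simp
    define U where "U = (\<Union>i\<in>Sk. B i)"
    define D where "D = (\<Sum>i\<in>Sk. \<Sum>j\<in>Sk. measure M (B i \<inter> B j))"
    have CE: "(\<Sum>i\<in>Sk. measure M (B i))^2 \<le> measure M U * D"
      unfolding U_def D_def using P.finite_measure_axioms finS Bs by (rule chung_erdos)
    have "D = (\<Sum>i\<in>Sk. measure M (B i \<inter> B i)) + 2 * (\<Sum>(s,t)\<in>{(s,t). s\<in>Sk \<and> t\<in>Sk \<and> s<t}. measure M (B s \<inter> B t))"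
      unfolding D_def using finS by (rule pair_split) (simp add: Int_commute)
    also have "(\<Sum>i\<in>Sk. measure M (B i \<inter> B i)) \<le> \<sigma>"
      unfolding \<sigma>_def using Es by (intro sum_mono P.finite_measure_mono) (auto simp: B_def)
    also have "(\<Sum>(s,t)\<in>{(s,t). s\<in>Sk \<and> t\<in>Sk \<and> s<t}. measure M (B s \<inter> B t))
        \<le> (\<Sum>(s,t)\<in>{(s,t). s\<in>Sk \<and> t\<in>Sk \<and> s<t}. measure M (E s \<inter> E t))"
      using Es by (intro sum_mono) (auto simp: B_def intro!: P.finite_measure_mono)
    also have "\<dots> \<le> C' * \<sigma>^2" using kp unfolding \<sigma>_def Sk_def .
    finally have Dle: "D \<le> \<sigma> + 2 * (C' * \<sigma>^2)" by simp
    have U0: "0 \<le> measure M U" by simp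
    have "(\<rho> * \<sigma>)^2 \<le> (\<Sum>i\<in>Sk. measure M (B i))^2"
      using sumB rs0 by (rule power_mono)
    also have "\<dots> \<le> measure M U * D" by (rule CE)
    also have "\<dots> \<le> measure M U * (\<sigma> + 2 * (C' * \<sigma>^2))"
      using Dle U0 by (rule mult_left_mono)
    finally have "\<sigma> * (\<rho>^2 * \<sigma>) \<le> \<sigma> * (measure M U * (1 + 2 * C' * \<sigma>))"
      by (simp add: power2_eq_square algebra_simps)
    then have st1: "\<rho>^2 * \<sigma> \<le> measure M U * (1 + 2 * C' * \<sigma>)"
      using sp by simp
    have "c * (1 + 2 * C' * \<sigma>) \<le> \<sigma> * (1 + 2 * C' * c)"
      using s0 by (simp add: algebra_simps)
    then have "\<rho>^2 * (c * (1 + 2 * C' * \<sigma>)) \<le> \<rho>^2 * (\<sigma> * (1 + 2 * C' * c))"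
      by (rule mult_left_mono) simp
    also have "\<dots> = (\<rho>^2 * \<sigma>) * (1 + 2 * C' * c)" by simp
    also have "\<dots> \<le> (measure M U * (1 + 2 * C' * \<sigma>)) * (1 + 2 * C' * c)"
      using st1 den by (intro mult_right_mono) auto
    finally have "(1 + 2 * C' * \<sigma>) * (\<rho>^2 * c) \<le> (1 + 2 * C' * \<sigma>) * (measure M U * (1 + 2 * C' * c))"
      by (simp add: algebra_simps)
    moreover have "1 + 2 * C' * \<sigma> > 0" using assms(3) sp by (simp add: add_pos_pos)
    ultimately have "\<rho>^2 * c \<le> measure M U * (1 + 2 * C' * c)" by simp
    then have Ubig: "\<rho>^2 * \<eta> \<le> measure M U"
      unfolding \<eta>_def using den by (simp add: field_simps)
    have Us: "U \<in> sets M" unfolding U_def using finS Bs by auto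
    have disj: "A q \<inter> U = {}" unfolding U_def B_def by auto
    have UF: "A q \<union> U \<subseteq> F t" using AqF Sge unfolding U_def B_def F_def by auto
    have "measure M (A q) + measure M U = measure M (A q \<union> U)"
      using As Us disj by (simp add: P.finite_measure_Union)
    also have "\<dots> \<le> m" unfolding m_def using UF Fs As Us by (intro P.finite_measure_mono) auto
    finally show False using Aq Ubig eps0 unfolding \<epsilon>_def by linarith
  qed
  have Einf: "E_infty E = (\<Inter>t. F t)" unfolding E_infty_def F_def ..
  have EIs: "(\<Inter>t. F t) \<in> sets M" using Fs by auto
  have "AE x in M. x \<in> F t" for t using P.AE_in_set_eq_1[OF Fs] key by simp
  then have "AE x in M. \<forall>t. x \<in> F t" by (simp add: AE_all_countable)
  then have "AE x in M. x \<in> (\<Inter>t. F t)" by simp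
  then show ?thesis unfolding Einf using P.AE_in_set_eq_1[OF EIs] by simp
qed

end
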